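(* Let $C=\{c_1,\dots,c_N\}\subset\mathbb{R}^d$ be an arbitrary finite set of centers and $P\subset\mathbb{R}^d$ an arbitrary finite nonempty set with $\mathrm{cost}(P,C)>0$. Pick a random point $c\in P$ with $\Pr(c=x)=\mathrm{cost}(x,C)/\mathrm{cost}(P,C)$ for $x\in P$, and let $C'=C\cup\{c\}$. Then $\mathbb{E}_c[\mathrm{cost}(P,C')]\le 5\,\mathrm{OPT}_1(P)$.
   Context: For a finite set $C\subset\mathbb{R}^d$ and a point $x$, $\mathrm{cost}(x,C)=\min_{c\in C}\|x-c\|^2$; for a finite set $\mathbf{Y}$, $\mathrm{cost}(\mathbf{Y},C)=\sum_{x\in\mathbf{Y}}\mathrm{cost}(x,C)$; $\mathrm{OPT}_1(\mathbf{Y})=\min_{z\in\mathbb{R}^d}\mathrm{cost}(\mathbf{Y},\{z\})$. *)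

theory Defs
  imports "HOL-Analysis.Analysis"
begin

definition cost_pt :: "'a::euclidean_space \<Rightarrow> 'a set \<Rightarrow> real" where
  "cost_pt x C = Min ((\<lambda>c. (norm (x - c))\<^sup>2) ` C)"

definition cost :: "'a::euclidean_space set \<Rightarrow> 'a set \<Rightarrow> real" where
  "cost Y C = (\<Sum>x\<in>Y. cost_pt x C)"

definition OPT1 :: "'a::euclidean_space set \<Rightarrow> real" where
  "OPT1 Y = (INF z. cost Y {z})"

end

theory Submission
  imports Defs
begin

lemma pair_abp:
  fixes a b p :: real
  assumes "a \<ge> 0" "b \<ge> 0" "p \<ge> 0" "b \<le> a + p" "a \<le> b"
  shows "b^2 * min (a^2) (p^2) + a^2 * min (b^2) (p^2) \<le> 5 * min (a^2) (b^2) * p^2"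
proof -
  have m: "min (a^2) (b^2) = a^2" using assms by (simp add: power_mono)
  show ?thesis
  proof (cases "p \<le> a")
    case True
    then have e1: "min (a^2) (p^2) = p^2" "min (b^2) (p^2) = p^2" using assms by (auto simp: power_mono min_def)
    have "b \<le> 2*a" using assms True by linarith
    then have "b^2 \<le> (2*a)^2" using assms by (intro power_mono) auto
    then have b4: "b^2 \<le> 4*a^2" by (simp add: power_mult_distrib)
    have "b^2 * p^2 \<le> 4*a^2*p^2" using b4 by (simp add: mult_right_mono)
    then show ?thesis using m e1 by (simp add: algebra_simps)
  next
    case False
    then have h1: "min (a^2) (p^2) = a^2" using assms by (auto simp: power_mono min_def)
    show ?thesis
    proof (cases "p \<le> b")
      case True
      then have e2: "min (b^2) (p^2) = p^2" using assms by (auto simp: power_mono min_def)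
      have "b \<le> 2*p" using assms False by linarith
      then have "b^2 \<le> (2*p)^2" using assms by (intro power_mono) auto
      then have b4: "b^2 \<le> 4*p^2" by (simp add: power_mult_distrib)
      have "b^2 * a^2 \<le> 4*p^2*a^2" using b4 by (simp add: mult_right_mono)
      then show ?thesis using m h1 e2 by (simp add: algebra_simps)
    next
      case F2: False
      then have e2: "min (b^2) (p^2) = b^2" using assms by (auto simp: power_mono min_def)
      have "b^2 \<le> p^2" using assms F2 by (intro power_mono) auto
      then have le: "a^2 * b^2 \<le> a^2*p^2" by (simp add: mult_left_mono)
      have nn: "0 \<le> a^2*p^2" by simp
      have eq: "b^2 * min (a^2) (p^2) + a^2 * min (b^2) (p^2) = 2*(a^2*b^2)" using h1 e2 by (simp add: algebra_simps)
      have eq2: "5 * min (a^2) (b^2) * p^2 = 5*(a^2*p^2)" using m by simp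
      show ?thesis unfolding eq eq2 using le nn by linarith
    qed
  qed
qed

lemma sumsq_le:
  fixes A :: "'a::euclidean_space set"
  assumes "finite A"
  shows "(\<Sum>x\<in>A. \<Sum>y\<in>A. (norm (x-y))^2) \<le> 2 * real (card A) * (\<Sum>x\<in>A. (norm (x-z))^2)"
proof -
  have e: "(norm (x-y))^2 = (norm (x-z))^2 + (norm (y-z))^2 - 2*((x-z)\<bullet>(y-z))" for x y
  proof -
    have "x - y = (x-z) - (y-z)" by simp
    then have "(norm (x-y))^2 = (norm ((x-z) - (y-z)))^2" by simp
    also have "\<dots> = (norm (x-z))^2 + (norm (y-z))^2 - 2*((x-z)\<bullet>(y-z))"
      by (simp add: power2_norm_eq_inner inner_diff_left inner_diff_right inner_commute algebra_simps)
    finally show ?thesis .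
  qed
  have inn: "(\<Sum>x\<in>A. \<Sum>y\<in>A. (x-z)\<bullet>(y-z)) = (\<Sum>x\<in>A. x-z) \<bullet> (\<Sum>y\<in>A. y-z)"
    by (simp only: inner_sum_left inner_sum_right) (rule sum.swap)
  have nn: "0 \<le> (\<Sum>x\<in>A. x-z) \<bullet> (\<Sum>y\<in>A. y-z)" by simp
  have "(\<Sum>x\<in>A. \<Sum>y\<in>A. (norm (x-y))^2)
     = (\<Sum>x\<in>A. \<Sum>y\<in>A. (norm (x-z))^2 + (norm (y-z))^2 - 2*((x-z)\<bullet>(y-z)))"
    by (intro sum.cong refl e)
  also have "\<dots> = (\<Sum>x\<in>A. real (card A) * (norm (x-z))^2) + (\<Sum>x\<in>A. \<Sum>y\<in>A. (norm (y-z))^2) - (\<Sum>x\<in>A. \<Sum>y\<in>A. 2*((x-z)\<bullet>(y-z)))"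
    by (simp only: sum.distrib sum_subtractf sum_constant)
  also have "\<dots> = 2 * real (card A) * (\<Sum>x\<in>A. (norm (x-z))^2) - 2 * (\<Sum>x\<in>A. \<Sum>y\<in>A. (x-z)\<bullet>(y-z))"
    by (simp only: sum_distrib_left[symmetric] sum_constant)
  finally show ?thesis using inn nn by linarith
qed

lemma layer:
  fixes D :: "'a::euclidean_space \<Rightarrow> real"
  assumes P: "finite P"
  shows "A \<subseteq> P \<Longrightarrow> (\<forall>x\<in>A. D x \<ge> 0) \<Longrightarrow>
    (\<Sum>x\<in>A. \<Sum>w\<in>A. min (D x) (D w) * (norm (x-w))^2) \<le> 2 * (\<Sum>x\<in>A. D x) * (\<Sum>x\<in>P. (norm (x-z))^2)"
proof (induction "card A" arbitrary: A D rule: less_induct)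
  case less
  define W where "W = (\<Sum>x\<in>P. (norm (x-z))^2)"
  have W0: "W \<ge> 0" by (simp add: W_def sum_nonneg)
  have fA: "finite A" using less.prems P finite_subset by blast
  show ?case
  proof (cases "A = {}")
    case True then show ?thesis by simp
  next
    case False
    define d where "d = Min (D ` A)"
    have "d \<in> D ` A" using fA False by (simp add: d_def)
    then obtain y where yA: "y \<in> A" and Dy: "D y = d" by auto
    have dle: "\<forall>x\<in>A. d \<le> D x" using fA by (simp add: d_def)
    have d0: "d \<ge> 0" using less.prems yA Dy by auto
    define D' where "D' = (\<lambda>x. D x - d)"
    define A' where "A' = A - {y}"
    have cA': "card A' < card A" using fA yA unfolding A'_def by (rule card_Diff1_less)
    have IH: "(\<Sum>x\<in>A'. \<Sum>w\<in>A'. min (D' x) (D' w) * (norm (x-w))^2) \<le> 2 * (\<Sum>x\<in>A'. D' x) * W"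
      using less.hyps[OF cA', of D'] less.prems dle unfolding W_def by (auto simp: A'_def D'_def)
    have split: "min (D x) (D w) = d + min (D' x) (D' w)" for x w by (simp add: D'_def min_def)
    have S1: "(\<Sum>x\<in>A. \<Sum>w\<in>A. min (D x) (D w) * (norm (x-w))^2)
       = d * (\<Sum>x\<in>A. \<Sum>w\<in>A. (norm (x-w))^2) + (\<Sum>x\<in>A. \<Sum>w\<in>A. min (D' x) (D' w) * (norm (x-w))^2)"
      by (simp only: split distrib_right sum.distrib sum_distrib_left)
    have Dy': "D' y = 0" by (simp add: D'_def Dy)
    have nn: "\<forall>x\<in>A. D' x \<ge> 0" using dle by (simp add: D'_def)
    have inner: "(\<Sum>w\<in>A. min (D' x) (D' w) * (norm (x-w))^2) = (\<Sum>w\<in>A'. min (D' x) (D' w) * (norm (x-w))^2)"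
      if "x \<in> A" for x
      using sum.remove[OF fA yA, of "\<lambda>w. min (D' x) (D' w) * (norm (x-w))^2"] Dy' nn that
      by (force simp: A'_def min_def)
    have zero: "(\<Sum>w\<in>A'. min (D' y) (D' w) * (norm (y-w))^2) = 0"
      using Dy' nn by (intro sum.neutral) (auto simp: A'_def min_def)
    have drop: "(\<Sum>x\<in>A. \<Sum>w\<in>A. min (D' x) (D' w) * (norm (x-w))^2)
        = (\<Sum>x\<in>A'. \<Sum>w\<in>A'. min (D' x) (D' w) * (norm (x-w))^2)"
    proof -
      have "(\<Sum>x\<in>A. \<Sum>w\<in>A. min (D' x) (D' w) * (norm (x-w))^2)
          = (\<Sum>x\<in>A. \<Sum>w\<in>A'. min (D' x) (D' w) * (norm (x-w))^2)"
        by (rule sum.cong) (simp_all add: inner)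
      also have "\<dots> = (\<Sum>w\<in>A'. min (D' y) (D' w) * (norm (y-w))^2) + (\<Sum>x\<in>A'. \<Sum>w\<in>A'. min (D' x) (D' w) * (norm (x-w))^2)"
        using sum.remove[OF fA yA, of "\<lambda>x. \<Sum>w\<in>A'. min (D' x) (D' w) * (norm (x-w))^2"] by (simp add: A'_def)
      finally show ?thesis using zero by simp
    qed
    have base0: "(\<Sum>x\<in>A. \<Sum>w\<in>A. (norm (x-w))^2) \<le> 2 * real (card A) * (\<Sum>x\<in>A. (norm (x-z))^2)"
      by (rule sumsq_le[OF fA])
    have "(\<Sum>x\<in>A. (norm (x-z))^2) \<le> W"
      unfolding W_def using less.prems P by (intro sum_mono2) auto
    then have base: "(\<Sum>x\<in>A. \<Sum>w\<in>A. (norm (x-w))^2) \<le> 2 * real (card A) * W"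
      using base0 by (smt (verit) mult_left_mono of_nat_0_le_iff)
    have sA: "(\<Sum>x\<in>A. D x) = d + (\<Sum>x\<in>A'. D x)"
      using sum.remove[OF fA yA, of D] Dy by (simp add: A'_def)
    have sA': "(\<Sum>x\<in>A'. D' x) = (\<Sum>x\<in>A'. D x) - real (card A') * d"
      by (simp add: D'_def sum_subtractf)
    have cc: "real (card A') = real (card A) - 1"
    proof -
      have "card A \<ge> 1" using fA yA card_0_eq[OF fA] by (cases "card A") auto
      then show ?thesis using fA yA by (simp add: A'_def of_nat_diff)
    qed
    have "(\<Sum>x\<in>A. \<Sum>w\<in>A. min (D x) (D w) * (norm (x-w))^2)
        \<le> d * (2 * real (card A) * W) + 2 * (\<Sum>x\<in>A'. D' x) * W"
      unfolding S1 drop using IH base d0 by (smt (verit) mult_left_mono)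
    also have "\<dots> = 2 * (\<Sum>x\<in>A. D x) * W"
      unfolding sA sA' cc by (simp add: algebra_simps)
    finally show ?thesis unfolding W_def .
  qed
qed

lemma pair_sym:
  fixes a b p :: real
  assumes "a \<ge> 0" "b \<ge> 0" "p \<ge> 0" "b \<le> a + p" "a \<le> b + p"
  shows "b^2 * min (a^2) (p^2) + a^2 * min (b^2) (p^2) \<le> 5 * min (a^2) (b^2) * p^2"
proof (cases "a \<le> b")
  case True then show ?thesis using pair_abp assms by blast
next
  case False
  then have "a^2 * min (b^2) (p^2) + b^2 * min (a^2) (p^2) \<le> 5 * min (b^2) (a^2) * p^2"
    using pair_abp[of b a p] assms by auto
  then show ?thesis by (simp add: min.commute add.commute)
qed

lemma cost_pt_insert:
  assumes "finite C" "C \<noteq> {}"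
  shows "cost_pt y (insert x C) = min (cost_pt y C) ((norm (y-x))^2)"
  unfolding cost_pt_def using assms by (simp add: min.commute)

lemma cost_pt_mem:
  assumes "finite C" "C \<noteq> {}"
  obtains e where "e \<in> C" "cost_pt x C = (norm (x-e))^2"
proof -
  have "cost_pt x C \<in> (\<lambda>c. (norm (x-c))^2) ` C" unfolding cost_pt_def using assms by (intro Min_in) auto
  then show ?thesis using that by auto
qed

lemma cost_pt_nonneg:
  assumes "finite C" "C \<noteq> {}"
  shows "cost_pt x C \<ge> 0"
  using cost_pt_mem[OF assms, of x] by (metis zero_le_power2)

lemma cost_pt_lip:
  assumes "finite C" "C \<noteq> {}"
  shows "sqrt (cost_pt c C) \<le> sqrt (cost_pt x C) + norm (x - c)"
proof -
  obtain e where e: "e \<in> C" "cost_pt x C = (norm (x-e))^2" using cost_pt_mem[OF assms] by blast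
  have "cost_pt c C \<le> (norm (c-e))^2" unfolding cost_pt_def using assms e by (intro Min_le) auto
  then have "sqrt (cost_pt c C) \<le> sqrt ((norm (c-e))^2)" by (rule real_sqrt_le_mono)
  also have "\<dots> = norm (c-e)" by simp
  also have "norm (c-e) = norm ((x-e) - (x-c))" by (simp add: algebra_simps)
  also have "\<dots> \<le> norm (x-e) + norm (x-c)" by (rule norm_triangle_ineq4)
  also have "norm (x-e) = sqrt (cost_pt x C)" using e by simp
  finally show ?thesis .
qed

theorem mainTheorem3:
  fixes C P :: "'a::euclidean_space set"
  assumes "finite C" and "C \<noteq> {}"
    and "finite P" and "P \<noteq> {}"
    and "cost P C > 0"
  shows "(\<Sum>x\<in>P. (cost_pt x C / cost P C) * cost P (C \<union> {x})) \<le> 5 * OPT1 P"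
proof -
  define D where "D = (\<lambda>x. cost_pt x C)"
  define S where "S = cost P C"
  have S: "S = (\<Sum>x\<in>P. D x)" unfolding S_def D_def cost_def ..
  have Spos: "S > 0" using assms(5) S_def by simp
  have D0: "\<forall>x\<in>P. D x \<ge> 0" using cost_pt_nonneg[OF assms(1,2)] by (simp add: D_def)
  have D0': "D x \<ge> 0" for x using cost_pt_nonneg[OF assms(1,2)] by (simp add: D_def)
  define G where "G = (\<Sum>x\<in>P. \<Sum>y\<in>P. D x * min (D y) ((norm (y-x))^2))"
  have LHS: "(\<Sum>x\<in>P. (cost_pt x C / cost P C) * cost P (C \<union> {x})) = G / S"
  proof -
    have ci: "cost P (C \<union> {x}) = (\<Sum>y\<in>P. min (D y) ((norm (y-x))^2))" for x
      by (simp add: cost_def D_def cost_pt_insert[OF assms(1,2)])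
    have Dx: "cost_pt x C = D x" for x by (simp add: D_def)
    have "(\<Sum>x\<in>P. (cost_pt x C / cost P C) * cost P (C \<union> {x}))
       = (\<Sum>x\<in>P. (\<Sum>y\<in>P. D x * min (D y) ((norm (y-x))^2)) / S)"
      unfolding S_def[symmetric] ci Dx
      by (intro sum.cong refl) (simp add: sum_distrib_left sum_divide_distrib)
    also have "\<dots> = G / S" unfolding G_def by (simp add: sum_divide_distrib)
    finally show ?thesis .
  qed
  have G_swap: "G = (\<Sum>x\<in>P. \<Sum>y\<in>P. D y * min (D x) ((norm (x-y))^2))"
    unfolding G_def by (rule sum.swap[symmetric])
  have pt: "D x * min (D y) ((norm (y-x))^2) + D y * min (D x) ((norm (x-y))^2)
      \<le> 5 * (min (D x) (D y) * (norm (x-y))^2)" for x y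
  proof -
    have "D x * min (D y) ((norm (x-y))^2) + D y * min (D x) ((norm (x-y))^2)
       \<le> 5 * min (D y) (D x) * (norm (x-y))^2"
      using pair_sym[of "sqrt (D y)" "sqrt (D x)" "norm (x-y)"]
        cost_pt_lip[OF assms(1,2), of x y] cost_pt_lip[OF assms(1,2), of y x] D0'[of x] D0'[of y]
      by (simp add: D_def norm_minus_commute)
    then show ?thesis by (simp add: norm_minus_commute min.commute mult.assoc)
  qed
  have "2 * G = G + (\<Sum>x\<in>P. \<Sum>y\<in>P. D y * min (D x) ((norm (x-y))^2))"
    using G_swap by simp
  also have "\<dots> = (\<Sum>x\<in>P. \<Sum>y\<in>P. D x * min (D y) ((norm (y-x))^2) + D y * min (D x) ((norm (x-y))^2))"
    unfolding G_def by (simp only: sum.distrib)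
  also have "\<dots> \<le> (\<Sum>x\<in>P. \<Sum>y\<in>P. 5 * (min (D x) (D y) * (norm (x-y))^2))"
    by (intro sum_mono pt)
  also have "\<dots> = 5 * (\<Sum>x\<in>P. \<Sum>y\<in>P. min (D x) (D y) * (norm (x-y))^2)"
    by (simp add: sum_distrib_left)
  finally have G2: "2 * G \<le> 5 * (\<Sum>x\<in>P. \<Sum>y\<in>P. min (D x) (D y) * (norm (x-y))^2)" .
  have bound: "G / S \<le> 5 * cost P {z}" for z
  proof -
    have cz: "cost P {z} = (\<Sum>x\<in>P. (norm (x-z))^2)" by (simp add: cost_def cost_pt_def)
    have "(\<Sum>x\<in>P. \<Sum>y\<in>P. min (D x) (D y) * (norm (x-y))^2) \<le> 2 * S * cost P {z}"
      unfolding S cz using layer[OF assms(3), of P D z] D0 by simp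
    then have "G \<le> 5 * S * cost P {z}" using G2 by linarith
    then show ?thesis using Spos by (simp add: divide_le_eq mult.commute mult.left_commute)
  qed
  have "G / S / 5 \<le> OPT1 P" unfolding OPT1_def
  proof (rule cINF_greatest)
    show "UNIV \<noteq> {}" by simp
  next
    fix z :: 'a
    have "G / S / 5 \<le> (5 * cost P {z}) / 5" by (rule divide_right_mono[OF bound]) simp
    then show "G / S / 5 \<le> cost P {z}" by simp
  qed
  then show ?thesis unfolding LHS by simp
qed

end
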